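(* For any finite set $P$ of prime numbers, there is a generalized Euclid sequence with seed $P$ that contains every prime number.
   Context: Given a finite set $\{p_1,\ldots,p_k\}$ of distinct primes, for any $I\subseteq\{1,\ldots,k\}$ put $N_I=\prod_{i\in I}p_i+\prod_{i\in\{1,\ldots,k\}\setminus I}p_i$ (empty products equal $1$); $N_I>1$ is coprime to $p_1\cdots p_k$. A generalized Euclid sequence with seed $\{p_1,\ldots,p_k\}$ is an infinite sequence of primes $p_1,p_2,\ldots$ beginning with the seed primes (in some order) such that for every $j\ge k$, $p_{j+1}$ is a prime factor of $N_I$ for some $I\subseteq\{1,\ldots,j\}$ (formed with $p_1,\ldots,p_j$ in place of $p_1,\ldots,p_k$). Equivalently, $p_{j+1}$ is a prime divisor of $d+n/d$ for some positive divisor $d$ of $n=p_1\cdots p_j$. *)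

theory Defs
  imports "HOL-Computational_Algebra.Primes"
begin

(* The sequence p_1, p_2, ... of the paper is rendered 0-indexed: p 0, p 1, ... *)
definition gen_euclid_seq :: "nat set \<Rightarrow> (nat \<Rightarrow> nat) \<Rightarrow> bool" where
  "gen_euclid_seq P p \<longleftrightarrow>
     (\<forall>i. prime (p i)) \<and>
     bij_betw p {..<card P} P \<and>
     (\<forall>j\<ge>card P. \<exists>I\<subseteq>{..<j}.
         p j dvd (\<Prod>i\<in>I. p i) + (\<Prod>i\<in>{..<j} - I. p i))"

end

theory Submission
  imports Defs "HOL-Number_Theory.Number_Theory"
begin

definition grp :: "nat \<Rightarrow> nat set \<Rightarrow> bool" where
  "grp q K \<longleftrightarrow> finite K \<and> K \<subseteq> {..<q} \<and> (\<forall>k\<in>K. \<not> q dvd k) \<and> (\<forall>a\<in>K. \<forall>b\<in>K. a*b mod q \<in> K)"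

lemma grp_bij:
  assumes q: "prime q" and G: "grp q K" and g: "g \<in> K"
  shows "bij_betw (\<lambda>k. g*k mod q) K K"
proof -
  have fin: "finite K" and sub: "K \<subseteq> {..<q}" and nz: "\<forall>k\<in>K. \<not> q dvd k"
    and cl: "\<forall>a\<in>K. \<forall>b\<in>K. a*b mod q \<in> K" using G by (auto simp: grp_def)
  have cop: "coprime g q" using nz g q by (metis coprime_commute prime_imp_coprime)
  have inj: "inj_on (\<lambda>k. g*k mod q) K"
  proof
    fix a b assume a: "a \<in> K" and b: "b \<in> K" and e: "g*a mod q = g*b mod q"
    then have "[a*g = b*g] (mod q)" by (simp add: cong_def mult.commute)
    then have "[a = b] (mod q)" using cop cong_mult_rcancel_nat by blast
    moreover have "a < q" "b < q" using a b sub by auto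
    ultimately show "a = b" by (simp add: cong_def)
  qed
  have im: "(\<lambda>k. g*k mod q) ` K \<subseteq> K" using cl g by auto
  have "(\<lambda>k. g*k mod q) ` K = K"
    using card_subset_eq[OF fin im] card_image[OF inj] by simp
  then show ?thesis using inj by (simp add: bij_betw_def)
qed

lemma grp_lagrange:
  assumes q: "prime q" and G: "grp q K" and y: "y \<in> K"
  shows "[y ^ card K = 1] (mod q)"
proof -
  have fin: "finite K" and nz: "\<forall>k\<in>K. \<not> q dvd k" using G by (auto simp: grp_def)
  have "(\<Prod>k\<in>K. y*k mod q) = (\<Prod>k\<in>K. k)"
    using prod.reindex_bij_betw[OF grp_bij[OF q G y], of "\<lambda>k. k"] by simp
  moreover have "[(\<Prod>k\<in>K. y*k mod q) = (\<Prod>k\<in>K. y*k)] (mod q)"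
    by (rule cong_prod) (simp add: cong_def)
  moreover have "(\<Prod>k\<in>K. y*k) = y ^ card K * (\<Prod>k\<in>K. k)"
    by (simp add: prod.distrib)
  ultimately have "[y ^ card K * (\<Prod>k\<in>K. k) = 1 * (\<Prod>k\<in>K. k)] (mod q)"
    by (metis cong_sym mult_1)
  moreover have "coprime (\<Prod>k\<in>K. k) q"
  proof -
    have "\<not> q dvd (\<Prod>k\<in>K. k)" using nz fin q by (simp add: prime_dvd_prod_iff)
    then show ?thesis using q by (metis coprime_commute prime_imp_coprime)
  qed
  ultimately show ?thesis using cong_mult_rcancel_nat by blast
qed

lemma grp_sum_pow:
  assumes q: "prime q" and G: "grp q K" and g: "g \<in> K" and ng: "\<not> [g ^ e = 1] (mod q)"
  shows "q dvd (\<Sum>k\<in>K. k ^ e)"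
proof (rule ccontr)
  assume nd: "\<not> q dvd (\<Sum>k\<in>K. k ^ e)"
  have "(\<Sum>k\<in>K. (g*k mod q) ^ e) = (\<Sum>k\<in>K. k ^ e)"
    using sum.reindex_bij_betw[OF grp_bij[OF q G g], of "\<lambda>k. k ^ e"] by simp
  moreover have "[(\<Sum>k\<in>K. (g*k mod q) ^ e) = (\<Sum>k\<in>K. (g*k) ^ e)] (mod q)"
    by (rule cong_sum) (simp add: cong_def power_mod)
  moreover have "(\<Sum>k\<in>K. (g*k) ^ e) = g ^ e * (\<Sum>k\<in>K. k ^ e)"
    by (simp add: power_mult_distrib sum_distrib_left)
  ultimately have "[g ^ e * (\<Sum>k\<in>K. k ^ e) = 1 * (\<Sum>k\<in>K. k ^ e)] (mod q)"
    by (metis cong_sym mult_1)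
  moreover have "coprime (\<Sum>k\<in>K. k ^ e) q" using nd q by (metis coprime_commute prime_imp_coprime)
  ultimately show False using cong_mult_rcancel_nat ng by blast
qed

lemma grp_root_bound:
  assumes q: "prime q" and G: "grp q K" and e: "e > 0" and r: "\<forall>k\<in>K. [k ^ e = 1] (mod q)"
  shows "card K \<le> e"
proof -
  have "K \<subseteq> {x\<in>{..<q}. [x ^ e = 1] (mod q)}" using G r by (auto simp: grp_def)
  then have "card K \<le> card {x\<in>{..<q}. [x ^ e = 1] (mod q)}" by (intro card_mono) auto
  also have "\<dots> \<le> e" using roots_mod_prime_bound[OF q e] by simp
  finally show ?thesis .
qed

lemma alg_main:
  assumes q: "prime q" and G: "grp q K" and one: "1 \<in> K" and c: "\<not> q dvd c"
    and h: "\<forall>k\<in>K. (1 + c*k^2) mod q \<in> K"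
  shows "even (card K) \<and> q dvd c ^ (card K div 2) + (card K choose (card K div 2))"
proof -
  define N where "N = card K"
  have fin: "finite K" and sub: "K \<subseteq> {..<q}" and nz: "\<forall>k\<in>K. \<not> q dvd k"
    using G by (auto simp: grp_def)
  have Npos: "N > 0" using one fin N_def by (auto simp: card_gt_0_iff)
  have "K \<subseteq> {1..<q}" using sub nz by (auto simp: Suc_le_eq intro!: Nat.gr0I)
  then have "N \<le> q - 1" unfolding N_def using card_mono[of "{1..<q}" K] by simp
  then have Nq: "\<not> q dvd N" using Npos q prime_gt_1_nat[OF q] by (auto dest: dvd_imp_le)
  have copN: "coprime N q" using Nq q by (metis coprime_commute prime_imp_coprime)
  have lag: "\<And>k. k \<in> K \<Longrightarrow> [k ^ N = 1] (mod q)" using grp_lagrange[OF q G] N_def by simp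
  define P where "P i \<longleftrightarrow> (\<forall>k\<in>K. [k ^ (2*i) = 1] (mod q))" for i
  have Pchar: "P i \<longleftrightarrow> (i = 0 \<or> i = N \<or> 2*i = N)" if iN: "i \<le> N" for i
  proof
    assume Pi: "P i"
    show "i = 0 \<or> i = N \<or> 2*i = N"
    proof (rule ccontr)
      assume nn: "\<not> (i = 0 \<or> i = N \<or> 2*i = N)"
      show False
      proof (cases "2*i < N")
        case True
        have "N \<le> 2*i" unfolding N_def
          by (rule grp_root_bound[OF q G]) (use nn Pi P_def in auto)
        then show False using True by simp
      next
        case False
        have r: "[k ^ (2*i - N) = 1] (mod q)" if k: "k \<in> K" for k
        proof -
          have "k ^ (2*i) = k ^ (2*i - N) * k ^ N" using False by (simp add: power_add[symmetric])
          then have "[k ^ (2*i - N) * k ^ N = 1] (mod q)" using Pi k P_def by metis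
          moreover have "[k ^ (2*i - N) * k ^ N = k ^ (2*i - N) * 1] (mod q)"
            by (rule cong_mult) (use lag[OF k] in auto)
          ultimately show ?thesis by (metis cong_sym cong_trans mult_1_right)
        qed
        have "N \<le> 2*i - N" unfolding N_def
          by (rule grp_root_bound[OF q G]) (use nn False r N_def in auto)
        then show False using nn iN by arith
      qed
    qed
  next
    assume "i = 0 \<or> i = N \<or> 2*i = N"
    then show "P i"
    proof (elim disjE)
      assume "i = N"
      then show ?thesis unfolding P_def
        using lag by (metis cong_pow power_mult power_one mult.commute)
    next
      assume "2*i = N"
      then show ?thesis unfolding P_def using lag by simp
    qed (simp add: P_def)
  qed
  have spow: "[(\<Sum>k\<in>K. k ^ (2*i)) = (if P i then N else 0)] (mod q)" for i
  proof (cases "P i")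
    case True
    have "[(\<Sum>k\<in>K. k ^ (2*i)) = (\<Sum>k\<in>K. 1)] (mod q)"
      by (rule cong_sum) (use True P_def in auto)
    then show ?thesis using True N_def by simp
  next
    case False
    then obtain g where g: "g \<in> K" "\<not> [g ^ (2*i) = 1] (mod q)" unfolding P_def by blast
    show ?thesis using grp_sum_pow[OF q G g] False by (simp add: cong_0_iff)
  qed
  have s1: "[(\<Sum>k\<in>K. (1 + c*k^2) ^ N) = (\<Sum>k\<in>K. 1)] (mod q)"
  proof (rule cong_sum)
    fix k assume k: "k \<in> K"
    have "[(1 + c*k^2) ^ N = ((1 + c*k^2) mod q) ^ N] (mod q)"
      by (simp add: cong_def power_mod)
    also have "[((1 + c*k^2) mod q) ^ N = 1] (mod q)" using lag h k by blast
    finally show "[(1 + c*k^2) ^ N = 1] (mod q)" .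
  qed
  have s2: "(\<Sum>k\<in>K. (1 + c*k^2) ^ N) = (\<Sum>i\<le>N. (N choose i) * c ^ i * (\<Sum>k\<in>K. k ^ (2*i)))"
  proof -
    have "(\<Sum>k\<in>K. (1 + c*k^2) ^ N) = (\<Sum>k\<in>K. \<Sum>i\<le>N. (N choose i) * c ^ i * k ^ (2*i))"
    proof (rule sum.cong)
      fix k
      have "(1 + c*k^2) ^ N = (c*k^2 + 1) ^ N" by (simp add: add.commute)
      also have "\<dots> = (\<Sum>i\<le>N. (N choose i) * (c*k^2) ^ i * 1 ^ (N - i))"
        using binomial_ring[of "c*k^2" "1::nat" N] by simp
      also have "\<dots> = (\<Sum>i\<le>N. (N choose i) * c ^ i * k ^ (2*i))"
        by (intro sum.cong refl) (simp only: power_one mult_1_right power_mult_distrib power_mult mult.assoc)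
      finally show "(1 + c*k^2) ^ N = (\<Sum>i\<le>N. (N choose i) * c ^ i * k ^ (2*i))" .
    qed simp
    also have "\<dots> = (\<Sum>i\<le>N. \<Sum>k\<in>K. (N choose i) * c ^ i * k ^ (2*i))"
      by (rule sum.swap)
    also have "\<dots> = (\<Sum>i\<le>N. (N choose i) * c ^ i * (\<Sum>k\<in>K. k ^ (2*i)))"
      by (simp add: sum_distrib_left)
    finally show ?thesis .
  qed
  define R where "R = (\<Sum>i\<in>{i. i \<le> N \<and> (i = 0 \<or> i = N \<or> 2*i = N)}. (N choose i) * c ^ i)"
  have s3: "[(\<Sum>i\<le>N. (N choose i) * c ^ i * (\<Sum>k\<in>K. k ^ (2*i))) = N * R] (mod q)"
  proof -
    have "[(\<Sum>i\<le>N. (N choose i) * c ^ i * (\<Sum>k\<in>K. k ^ (2*i)))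
          = (\<Sum>i\<le>N. (N choose i) * c ^ i * (if P i then N else 0))] (mod q)"
      by (intro cong_sum cong_mult cong_refl spow)
    also have "(\<Sum>i\<le>N. (N choose i) * c ^ i * (if P i then N else 0))
        = (\<Sum>i\<le>N. if (i = 0 \<or> i = N \<or> 2*i = N) then N * ((N choose i) * c ^ i) else 0)"
      by (rule sum.cong) (auto simp: Pchar)
    also have "\<dots> = (\<Sum>i\<in>{i\<in>{..N}. (i = 0 \<or> i = N \<or> 2*i = N)}. N * ((N choose i) * c ^ i))"
      by (rule sum.inter_filter[symmetric]) simp
    also have "\<dots> = N * R" unfolding R_def by (simp add: sum_distrib_left)
    finally show ?thesis .
  qed
  have a: "[(\<Sum>k\<in>K. (1 + c*k^2) ^ N) = N] (mod q)" using s1 N_def by simp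
  have b: "[(\<Sum>k\<in>K. (1 + c*k^2) ^ N) = N * R] (mod q)" using s3 s2 by simp
  have "[N * R = N] (mod q)" using cong_trans[OF cong_sym[OF b] a] .
  then have "[R * N = 1 * N] (mod q)" by (simp add: mult.commute)
  then have R1: "[R = 1] (mod q)" using copN cong_mult_rcancel_nat by blast
  have cN: "\<not> q dvd c ^ m" for m using c q prime_dvd_power by blast
  show ?thesis
  proof (cases "even N")
    case False
    then have "{i. i \<le> N \<and> (i = 0 \<or> i = N \<or> 2*i = N)} = {0, N}" by auto
    then have "R = 1 + c ^ N" unfolding R_def using Npos by simp
    then have "[c ^ N + 1 = 0 + 1] (mod q)" using R1 by (simp add: add.commute)
    then have "[c ^ N = 0] (mod q)" using cong_add_rcancel_nat by blast
    then show ?thesis using cN by (simp add: cong_0_iff)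
  next
    case True
    then obtain m where m: "N = 2*m" by blast
    have mpos: "m > 0" using m Npos by simp
    have "{i. i \<le> N \<and> (i = 0 \<or> i = N \<or> 2*i = N)} = {0, m, N}" using m by auto
    then have "R = 1 + ((N choose m) * c ^ m + c ^ N)" unfolding R_def using mpos m by simp
    then have "[1 + ((N choose m) * c ^ m + c ^ N) = 1 + 0] (mod q)" using R1 by simp
    then have "[(N choose m) * c ^ m + c ^ N = 0] (mod q)" using cong_add_lcancel_nat by blast
    moreover have "(N choose m) * c ^ m + c ^ N = c ^ m * (c ^ m + (N choose m))"
    proof -
      have "c ^ N = c ^ m * c ^ m" using m by (simp add: mult_2 power_add)
      then show ?thesis by (simp add: distrib_left mult.commute)
    qed
    ultimately have "q dvd c ^ m * (c ^ m + (N choose m))" by (simp add: cong_0_iff)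
    then have "q dvd c ^ m + (N choose m)" using cN q prime_dvd_mult_iff by blast
    then show ?thesis using True m N_def by simp
  qed
qed

definition splits :: "nat set \<Rightarrow> nat \<Rightarrow> bool" where
  "splits A r \<longleftrightarrow> (\<exists>T\<subseteq>A. r dvd (\<Prod>x\<in>T. x) + (\<Prod>x\<in>A - T. x))"

fun valid :: "nat set \<Rightarrow> nat list \<Rightarrow> bool" where
  "valid A [] = True"
| "valid A (x # xs) = (prime x \<and> splits A x \<and> valid (insert x A) xs)"

lemma prod_primes_not_dvd:
  assumes "finite T" "\<forall>p\<in>T. prime p" "prime (r::nat)" "r \<notin> T"
  shows "\<not> r dvd (\<Prod>x\<in>T. x)"
proof
  assume "r dvd (\<Prod>x\<in>T. x)"
  then obtain x where "x \<in> T" "r dvd x" using assms by (auto simp: prime_dvd_prod_iff)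
  then have "r = x" using assms by (metis prime_nat_iff prime_gt_1_nat not_prime_1)
  then show False using assms \<open>x \<in> T\<close> by simp
qed

lemma splits_notin:
  assumes fin: "finite A" and pr: "\<forall>p\<in>A. prime p" and r: "prime r" and sp: "splits A r"
  shows "r \<notin> A"
proof
  assume rA: "r \<in> A"
  obtain T where T: "T \<subseteq> A" and d: "r dvd (\<Prod>x\<in>T. x) + (\<Prod>x\<in>A - T. x)"
    using sp by (auto simp: splits_def)
  have finT: "finite T" using T fin finite_subset by blast
  show False
  proof (cases "r \<in> T")
    case True
    then have "r dvd (\<Prod>x\<in>T. x)" using dvd_prodI[OF finT True, of "\<lambda>x. x"] by simp
    then have "r dvd (\<Prod>x\<in>A - T. x)" using d by (simp add: dvd_add_right_iff)
    moreover have "\<not> r dvd (\<Prod>x\<in>A - T. x)"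
      by (rule prod_primes_not_dvd) (use fin pr r True in auto)
    ultimately show False by simp
  next
    case False
    then have "r \<in> A - T" using rA by simp
    then have "r dvd (\<Prod>x\<in>A - T. x)" using dvd_prodI[of "A - T" r "\<lambda>x. x"] fin by simp
    then have "r dvd (\<Prod>x\<in>T. x)" using d by (simp add: dvd_add_left_iff)
    moreover have "\<not> r dvd (\<Prod>x\<in>T. x)"
      by (rule prod_primes_not_dvd) (use finT pr r False T in auto)
    ultimately show False by simp
  qed
qed

inductive_set Kc :: "nat \<Rightarrow> nat set \<Rightarrow> nat set" for q :: nat and Q :: "nat set" where
  Kc_one: "1 \<in> Kc q Q"
| Kc_step: "x \<in> Q \<Longrightarrow> k \<in> Kc q Q \<Longrightarrow> x * k mod q \<in> Kc q Q"

context
  fixes q :: nat and Q :: "nat set"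
  assumes q: "prime q" and Qs: "Q \<subseteq> {..<q}" and Qnz: "\<forall>x\<in>Q. \<not> q dvd x"
begin

lemma Kc_props: "k \<in> Kc q Q \<Longrightarrow> k < q \<and> \<not> q dvd k"
proof (induction rule: Kc.induct)
  case Kc_one
  then show ?case using prime_gt_1_nat[OF q] q by (auto simp: prime_nat_iff)
next
  case (Kc_step x k)
  have "\<not> q dvd x * k" using Kc_step Qnz q prime_dvd_mult_iff by blast
  then show ?case using q prime_gt_1_nat[OF q] by (auto simp: dvd_mod_iff)
qed

lemma Kc_mult: "a \<in> Kc q Q \<Longrightarrow> b \<in> Kc q Q \<Longrightarrow> a * b mod q \<in> Kc q Q"
proof (induction rule: Kc.induct)
  case Kc_one
  then show ?case using Kc_props by simp
next
  case (Kc_step x k)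
  have "(x * k mod q) * b mod q = x * (k * b mod q) mod q"
    by (simp add: mod_mult_left_eq mod_mult_right_eq mult.assoc)
  then show ?case using Kc_step Kc.Kc_step by simp
qed

lemma Kc_pow: "a \<in> Kc q Q \<Longrightarrow> a ^ n mod q \<in> Kc q Q"
proof (induction n)
  case 0
  then show ?case using prime_gt_1_nat[OF q] Kc_one by simp
next
  case (Suc n)
  have "a ^ Suc n mod q = a * (a ^ n mod q) mod q" by (simp add: mod_mult_right_eq)
  then show ?case using Kc_mult Suc by simp
qed

lemma Q_sub_Kc: "x \<in> Q \<Longrightarrow> x \<in> Kc q Q"
proof -
  assume x: "x \<in> Q"
  have "x * 1 mod q \<in> Kc q Q" by (rule Kc.Kc_step[OF x Kc.Kc_one])
  then show ?thesis using x Qs by auto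
qed

lemma Kc_grp: "grp q (Kc q Q)"
proof -
  have "Kc q Q \<subseteq> {..<q}" using Kc_props by auto
  then show ?thesis unfolding grp_def using Kc_props Kc_mult finite_subset by blast
qed

end


lemma prod_mod_nz:
  fixes q :: nat
  assumes q: "prime q" and "finite T" "\<forall>p\<in>T. prime p" "q \<notin> T"
  shows "\<not> q dvd (\<Prod>x\<in>T. x) mod q"
  using prod_primes_not_dvd[OF assms(2,3) q assms(4)] by (simp add: dvd_mod_iff)

theorem reach:
  assumes q: "prime q" and finA: "finite A" and prA: "\<forall>p\<in>A. prime p" and qA: "q \<notin> A"
  shows "\<exists>xs. valid A xs \<and> q \<in> set xs"
proof (rule ccontr)
  assume nA: "\<not> ?thesis"
  define W where "W B \<longleftrightarrow> (\<exists>xs. valid B xs \<and> q \<in> set xs)" for B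
  define LL where "LL = {B. finite B \<and> (\<forall>p\<in>B. prime p) \<and> q \<notin> B \<and> \<not> W B}"
  define Y where "Y B = (\<lambda>T. (\<Prod>x\<in>T. x) mod q) ` Pow B" for B
  have q1: "q > 1" using prime_gt_1_nat[OF q] .
  have W_base: "W B" if "splits B q" for B
    unfolding W_def by (rule exI[of _ "[q]"]) (use that q in auto)
  have W_step: "W B" if h1: "prime r" and h2: "splits B r" and h3: "W (insert r B)" for B r
  proof -
    obtain xs where "valid (insert r B) xs" "q \<in> set xs" using h3 W_def by blast
    then show ?thesis unfolding W_def using h1 h2 by (intro exI[of _ "r # xs"]) auto
  qed
  have AL: "A \<in> LL" using nA finA prA qA by (auto simp: LL_def W_def)
  have Ybound: "card (Y B) < q + 1" for B
  proof -
    have "Y B \<subseteq> {..<q}" using q1 by (auto simp: Y_def)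
    then have "card (Y B) \<le> q" using card_mono[of "{..<q}" "Y B"] by simp
    then show ?thesis by simp
  qed
  obtain A1 where A1: "A1 \<in> LL" and A1max: "\<And>B. B \<in> LL \<Longrightarrow> card (Y B) \<le> card (Y A1)"
    using ex_has_greatest_nat[of "\<lambda>B. B \<in> LL" A "\<lambda>B. card (Y B)" "q+1"] AL Ybound by blast
  have Yfin: "finite (Y B)" if "finite B" for B using that by (simp add: Y_def)
  have Ynz: "y < q \<and> \<not> q dvd y" if yB: "B \<in> LL" and yy: "y \<in> Y B" for B y
  proof -
    obtain T where T: "T \<subseteq> B" "y = (\<Prod>x\<in>T. x) mod q" using yy by (auto simp: Y_def)
    have "finite T" "\<forall>p\<in>T. prime p" "q \<notin> T" using yB T by (auto simp: LL_def intro: finite_subset)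
    then show ?thesis using prod_mod_nz[OF q] T q1 by auto
  qed
  define Y0 where "Y0 = Y A1"
  define H where "H = {h. h < q \<and> (\<forall>y\<in>Y0. h * y mod q \<in> Y0)}"
  define C where "C = {(\<Prod>x\<in>B. x) mod q | B. B \<in> LL \<and> Y B = Y0}"
  have one_Y0: "1 \<in> Y0" unfolding Y0_def Y_def using q1 by (auto intro!: image_eqI[of _ _ "{}"])
  have H_Y0: "H \<subseteq> Y0"
  proof
    fix h assume "h \<in> H"
    then have "h * 1 mod q \<in> Y0" "h < q" using one_Y0 by (auto simp: H_def)
    then show "h \<in> Y0" by simp
  qed
  have Y0_lt: "y < q" if "y \<in> Y0" for y using Ynz[OF A1] that Y0_def by blast
  have H_mult: "h1 * h2 mod q \<in> H" if "h1 \<in> H" "h2 \<in> H" for h1 h2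
  proof -
    have "(h1 * h2 mod q) * y mod q \<in> Y0" if "y \<in> Y0" for y
    proof -
      have "(h1 * h2 mod q) * y mod q = h1 * (h2 * y mod q) mod q"
        by (simp add: mod_mult_left_eq mod_mult_right_eq mult.assoc)
      then show ?thesis using \<open>h1 \<in> H\<close> \<open>h2 \<in> H\<close> that by (auto simp: H_def)
    qed
    then show ?thesis using q1 by (auto simp: H_def)
  qed
  have one_H: "1 \<in> H" using q1 Y0_lt by (auto simp: H_def)
  have KF: "r mod q \<in> H \<and> (\<Prod>x\<in>B. x) * r mod q \<in> C"
    if B: "B \<in> LL" "Y B = Y0" and r: "prime r" "splits B r" for B r
  proof -
    have finB: "finite B" and prB: "\<forall>p\<in>B. prime p" and qB: "q \<notin> B" and nW: "\<not> W B"
      using B by (auto simp: LL_def)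
    have rB: "r \<notin> B" using splits_notin[OF finB prB r] .
    have rq: "r \<noteq> q" using W_base r nW by blast
    define B' where "B' = insert r B"
    have B'L: "B' \<in> LL" using finB prB qB rq r W_step nW by (auto simp: LL_def B'_def)
    have sub: "Y B \<subseteq> Y B'" unfolding Y_def B'_def by auto
    have "card (Y B') \<le> card (Y B)" using A1max[OF B'L] B(2) Y0_def by simp
    moreover have fYB': "finite (Y B')" using Yfin B'L by (simp add: LL_def)
    moreover have "card (Y B) \<le> card (Y B')" using card_mono[OF fYB' sub] .
    ultimately have "Y B = Y B'" using card_subset_eq[OF fYB' sub] by simp
    then have YB': "Y B' = Y0" using B(2) by simp
    have "r mod q \<in> H"
    proof -
      have "(r mod q) * y mod q \<in> Y0" if y: "y \<in> Y0" for y
      proof -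
        obtain T where T: "T \<subseteq> B" "y = (\<Prod>x\<in>T. x) mod q" using y B(2) by (auto simp: Y_def)
        have finT: "finite T" using T finB finite_subset by blast
        have rT: "r \<notin> T" using T rB by auto
        have "(r mod q) * y mod q = (\<Prod>x\<in>insert r T. x) mod q"
          using T finT rT by (simp add: mod_mult_left_eq mod_mult_right_eq)
        moreover have "insert r T \<in> Pow B'" using T B'_def by auto
        ultimately show ?thesis using YB' by (auto simp: Y_def)
      qed
      then show ?thesis using q1 by (auto simp: H_def)
    qed
    moreover have "(\<Prod>x\<in>B. x) * r mod q \<in> C"
    proof -
      have "(\<Prod>x\<in>B'. x) = (\<Prod>x\<in>B. x) * r" using finB rB B'_def by (simp add: mult.commute)
      then show ?thesis using B'L YB' unfolding C_def by force
    qed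
    ultimately show ?thesis by simp
  qed
  define c0 where "c0 = (\<Prod>x\<in>A1. x) mod q"
  define Q where "Q = {x \<in> H. c0 * x mod q \<in> C}"
  have Qs: "Q \<subseteq> {..<q}" using H_def Q_def by auto
  have Qnz: "\<forall>x\<in>Q. \<not> q dvd x"
    using H_Y0 Ynz[OF A1] Y0_def Q_def by blast
  define K where "K = Kc q Q"
  have K_H: "K \<subseteq> H"
  proof
    fix k assume "k \<in> K"
    then show "k \<in> H" unfolding K_def
    proof (induction rule: Kc.induct)
      case Kc_one then show ?case using one_H .
    next
      case (Kc_step x k) then show ?case using H_mult Q_def by auto
    qed
  qed
  have Kprops: "k < q \<and> \<not> q dvd k" if "k \<in> K" for k using Kc_props[OF q Qs Qnz] that K_def by blast
  have Kmult: "a * b mod q \<in> K" if "a \<in> K" "b \<in> K" for a b using Kc_mult[OF q Qs Qnz] that K_def by blast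
  have Kpow: "a ^ n mod q \<in> K" if "a \<in> K" for a n using Kc_pow[OF q Qs Qnz] that K_def by blast
  have QK: "Q \<subseteq> K" using Q_sub_Kc[OF q Qs Qnz] K_def by blast
  have Kgrp: "grp q K" using Kc_grp[OF q Qs Qnz] K_def by simp
  have one_K: "1 \<in> K" using K_def Kc_one by simp
  have inv: "[k ^ (q - 2) * k = 1] (mod q)" if "k \<in> K" for k
  proof -
    have "k ^ (q - 2) * k = k ^ (q - 1)" using q1
      by (metis Suc_diff_Suc numeral_2_eq_2 power_Suc2 Suc_1 diff_Suc_1 less_numeral_extra(4) not_less_iff_gr_or_eq one_less_numeral_iff semiring_norm(76))
    then show ?thesis using fermat_theorem[OF q] Kprops[OF that] by simp
  qed
  have Kinv: "k ^ (q - 2) mod q \<in> K" if "k \<in> K" for k using Kpow that .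
  have KB: "r mod q \<in> K"
    if B: "B \<in> LL" "Y B = Y0" and x: "x \<in> K" and cB: "(\<Prod>x\<in>B. x) mod q = c0 * x mod q"
    and r: "prime r" "splits B r" for B x r
  proof -
    have rH: "r mod q \<in> H" and rC: "(\<Prod>x\<in>B. x) * r mod q \<in> C" using KF[OF B r] by auto
    define z where "z = x * (r mod q) mod q"
    have zH: "z \<in> H" using H_mult[OF _ rH, of x] x K_H z_def by auto
    have "c0 * z mod q = (\<Prod>x\<in>B. x) * r mod q"
    proof -
      have "c0 * z mod q = (c0 * x) * r mod q" unfolding z_def
        by (simp add: mod_mult_right_eq mult.assoc)
      also have "\<dots> = (c0 * x mod q) * r mod q" by (simp add: mod_mult_left_eq)
      also have "\<dots> = ((\<Prod>x\<in>B. x) mod q) * r mod q" using cB by simp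
      also have "\<dots> = (\<Prod>x\<in>B. x) * r mod q" by (simp add: mod_mult_left_eq)
      finally show ?thesis .
    qed
    then have "z \<in> Q" using zH rC Q_def by simp
    then have zK: "z \<in> K" using QK by auto
    have "(x ^ (q - 2) mod q) * z mod q \<in> K" using Kmult[OF Kinv[OF x] zK] .
    moreover have "(x ^ (q - 2) mod q) * z mod q = r mod q"
    proof -
      have "(x ^ (q - 2) mod q) * z mod q = (x ^ (q - 2) * x) * r mod q" unfolding z_def
        by (simp add: mod_mult_left_eq mod_mult_right_eq mult.assoc)
      also have "\<dots> = 1 * r mod q" using inv[OF x] by (metis cong_def mod_mult_left_eq)
      finally show ?thesis by simp
    qed
    ultimately show ?thesis by simp
  qed
  have KU: "((\<Prod>x\<in>T. x) + (\<Prod>x\<in>B - T. x)) mod q \<in> K"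
    if B: "B \<in> LL" "Y B = Y0" and x: "x \<in> K" and cB: "(\<Prod>x\<in>B. x) mod q = c0 * x mod q"
    and T: "T \<subseteq> B" for B x T
  proof -
    define u where "u = (\<Prod>x\<in>T. x) + (\<Prod>x\<in>B - T. x)"
    have finB: "finite B" and prB: "\<forall>p\<in>B. prime p" using B by (auto simp: LL_def)
    have "(\<Prod>x\<in>T. x) > 0" using T prB by (intro prod_pos) (auto simp: prime_gt_0_nat)
    then have upos: "u > 0" unfolding u_def by simp
    have "v dvd u \<longrightarrow> v mod q \<in> K" for v
    proof (induction v rule: less_induct)
      case (less v)
      show ?case
      proof
        assume vu: "v dvd u"
        show "v mod q \<in> K"
        proof (cases "v = 1")
          case True then show ?thesis using one_K q1 by simp
        next
          case False
          then obtain r where r: "prime r" "r dvd v" using prime_factor_nat by blast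
          have v0: "v \<noteq> 0" using vu upos by auto
          have "r dvd u" using r vu dvd_trans by blast
          then have "splits B r" using T unfolding splits_def u_def by blast
          then have rK: "r mod q \<in> K" using KB[OF B x cB r(1)] by simp
          define w where "w = v div r"
          have vw: "v = r * w" using r w_def by simp
          have "w < v" using vw v0 prime_gt_1_nat[OF r(1)] by simp
          moreover have "w dvd u" using vw vu by (metis dvd_mult_right)
          ultimately have wK: "w mod q \<in> K" using less by blast
          have "v mod q = (r mod q) * (w mod q) mod q" using vw by (simp add: mod_mult_eq)
          then show ?thesis using Kmult[OF rK wK] by simp
        qed
      qed
    qed
    then show ?thesis unfolding u_def by simp
  qed
  have K4: "(1 + ((\<Prod>x\<in>B. x) mod q) * k^2) mod q \<in> K"
    if B: "B \<in> LL" "Y B = Y0" and x: "x \<in> K" and cB: "(\<Prod>x\<in>B. x) mod q = c0 * x mod q"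
    and k: "k \<in> K" for B x k
  proof -
    have finB: "finite B" using B by (auto simp: LL_def)
    define d where "d = k ^ (q - 2) mod q"
    have "d \<in> Y B" using Kinv[OF k] K_H H_Y0 B(2) d_def by auto
    then obtain T where T: "T \<subseteq> B" "d = (\<Prod>x\<in>T. x) mod q" by (auto simp: Y_def)
    define a where "a = (\<Prod>x\<in>T. x)"
    define b where "b = (\<Prod>x\<in>B - T. x)"
    define c where "c = (\<Prod>x\<in>B. x) mod q"
    have ab: "(\<Prod>x\<in>B. x) = a * b" unfolding a_def b_def
      using prod.subset_diff[OF T(1) finB, of "\<lambda>x. x"] by (simp add: mult.commute)
    have uK: "(a + b) mod q \<in> K" using KU[OF B x cB T(1)] a_def b_def by simp
    have ak: "[a * k = 1] (mod q)"
    proof -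
      have "[a = k ^ (q - 2)] (mod q)" using T(2) a_def d_def by (simp add: cong_def)
      then have "[a * k = k ^ (q - 2) * k] (mod q)" by (rule cong_mult) simp
      then show ?thesis using inv[OF k] cong_trans by blast
    qed
    have ck: "[c * k^2 = b * k] (mod q)"
    proof -
      have "[c * k^2 = (a * b) * k^2] (mod q)" unfolding c_def using ab
        by (intro cong_mult) (simp_all add: cong_def)
      moreover have "(a * b) * k^2 = (a * k) * (b * k)" by (simp add: power2_eq_square mult.commute mult.left_commute)
      moreover have "[(a * k) * (b * k) = 1 * (b * k)] (mod q)" by (rule cong_mult) (use ak in auto)
      ultimately show ?thesis by (metis cong_trans mult_1)
    qed
    have "[(a + b) * k = 1 + c * k^2] (mod q)"
    proof -
      have "(a + b) * k = a * k + b * k" by (simp add: distrib_right)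
      moreover have "[a * k + b * k = 1 + c * k^2] (mod q)"
        by (rule cong_add) (use ak ck cong_sym in auto)
      ultimately show ?thesis by simp
    qed
    then have "((a + b) mod q) * k mod q = (1 + c * k^2) mod q"
      by (simp add: cong_def mod_mult_left_eq)
    moreover have "((a + b) mod q) * k mod q \<in> K" using Kmult[OF uK k] .
    ultimately show ?thesis using c_def by simp
  qed
  have A1Y: "Y A1 = Y0" using Y0_def by simp
  have c0lt: "c0 < q" using c0_def q1 by simp
  have A1c: "(\<Prod>x\<in>A1. x) mod q = c0 * 1 mod q" using c0_def by simp
  have nzB: "\<not> q dvd (\<Prod>x\<in>B. x) mod q" if "B \<in> LL" for B
    using prod_mod_nz[OF q] that by (auto simp: LL_def)
  define N where "N = card K"
  define m where "m = N div 2"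
  have alg: "q dvd ((\<Prod>x\<in>B. x) mod q) ^ m + (N choose m) \<and> even N"
    if B: "B \<in> LL" "Y B = Y0" and x: "x \<in> K" and cB: "(\<Prod>x\<in>B. x) mod q = c0 * x mod q" for B x
    using alg_main[OF q Kgrp one_K nzB[OF B(1)]] K4[OF B x cB] N_def m_def by auto
  have c0nz: "\<not> q dvd c0" using nzB[OF A1] c0_def by simp
  have alg0: "q dvd c0 ^ m + (N choose m)" and evN: "even N"
    using alg[OF A1 A1Y one_K A1c] c0_def by auto
  have xm: "[x ^ m = 1] (mod q)" if x: "x \<in> Q" for x
  proof -
    have "c0 * x mod q \<in> C" using x Q_def by simp
    then obtain B where B: "B \<in> LL" "Y B = Y0" and cB: "(\<Prod>x\<in>B. x) mod q = c0 * x mod q"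
      unfolding C_def by auto
    have "q dvd (c0 * x mod q) ^ m + (N choose m)" using alg[OF B _ cB] B QK x cB by auto
    then have e1: "[(c0 * x mod q) ^ m + (N choose m) = 0] (mod q)" by (simp add: cong_0_iff)
    have e2: "[c0 ^ m + (N choose m) = 0] (mod q)" using alg0 by (simp add: cong_0_iff)
    have "[(c0 * x mod q) ^ m + (N choose m) = c0 ^ m + (N choose m)] (mod q)"
      using cong_trans[OF e1 cong_sym[OF e2]] .
    then have "[(c0 * x mod q) ^ m = c0 ^ m] (mod q)" using cong_add_rcancel_nat by blast
    then have "[(c0 * x) ^ m = c0 ^ m] (mod q)" by (simp add: cong_def power_mod)
    then have "[x ^ m * c0 ^ m = 1 * c0 ^ m] (mod q)" by (simp add: power_mult_distrib mult.commute)
    moreover have "coprime (c0 ^ m) q"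
      using c0nz q by (metis coprime_commute prime_imp_coprime prime_dvd_power)
    ultimately show ?thesis using cong_mult_rcancel_nat by blast
  qed
  have allK: "[k ^ m = 1] (mod q)" if "k \<in> K" for k
    using that unfolding K_def
  proof (induction rule: Kc.induct)
    case Kc_one then show ?case by simp
  next
    case (Kc_step x k)
    have "[(x * k mod q) ^ m = x ^ m * k ^ m] (mod q)"
      by (simp add: cong_def power_mod power_mult_distrib)
    also have "[x ^ m * k ^ m = 1 * 1] (mod q)" using xm[OF Kc_step(1)] Kc_step(3) by (rule cong_mult)
    finally show ?case by simp
  qed
  have Npos: "N > 0" using one_K Kgrp N_def by (auto simp: grp_def card_gt_0_iff)
  have mpos: "m > 0" using evN Npos m_def by auto
  have "N \<le> m" using grp_root_bound[OF q Kgrp mpos] allK N_def by auto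
  then show False using Npos m_def by simp
qed


lemma reach2:
  assumes fin: "finite A" and pr: "\<forall>p\<in>A. prime p" and q: "prime q"
  shows "\<exists>xs. valid A xs \<and> xs \<noteq> [] \<and> q \<in> A \<union> set xs"
proof (cases "q \<in> A")
  case False
  then obtain xs where "valid A xs" "q \<in> set xs" using reach[OF q fin pr] by blast
  then show ?thesis by (intro exI[of _ xs]) auto
next
  case True
  obtain q' where q'0: "prime q'" "q' > Max (insert 0 A)" using bigger_prime by blast
  have "q' \<notin> A"
  proof
    assume "q' \<in> A"
    then have "q' \<le> Max (insert 0 A)" using fin by (intro Max_ge) auto
    then show False using q'0 by simp
  qed
  then have q': "prime q'" "q' \<notin> A" using q'0 by auto
  then obtain xs where "valid A xs" "q' \<in> set xs" using reach[OF q'(1) fin pr q'(2)] by blast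
  then show ?thesis using True by (intro exI[of _ xs]) auto
qed

definition good :: "nat \<Rightarrow> nat list \<Rightarrow> bool" where
  "good k L \<longleftrightarrow> distinct L \<and> (\<forall>x\<in>set L. prime x) \<and>
     (\<forall>j. k \<le> j \<and> j < length L \<longrightarrow> splits (set (take j L)) (L ! j))"

lemma good_append: "good k L \<Longrightarrow> valid (set L) xs \<Longrightarrow> good k (L @ xs)"
proof (induction xs arbitrary: L)
  case Nil then show ?case by simp
next
  case (Cons x xs)
  have x: "prime x" "splits (set L) x" and v: "valid (insert x (set L)) xs" using Cons.prems by auto
  have xL: "x \<notin> set L" using splits_notin[OF _ _ x(1) x(2)] Cons.prems(1) by (auto simp: good_def)
  have "good k (L @ [x])"
    unfolding good_def
  proof (intro conjI allI impI)
    show "distinct (L @ [x])" using xL Cons.prems(1) by (simp add: good_def)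
    show "\<forall>y\<in>set (L @ [x]). prime y" using x Cons.prems(1) by (simp add: good_def)
  next
    fix j assume j: "k \<le> j \<and> j < length (L @ [x])"
    show "splits (set (take j (L @ [x]))) ((L @ [x]) ! j)"
    proof (cases "j < length L")
      case True
      then show ?thesis using Cons.prems(1) j by (simp add: good_def nth_append)
    next
      case False
      then have "j = length L" using j by simp
      then show ?thesis using x by simp
    qed
  qed
  moreover have "set (L @ [x]) = insert x (set L)" by simp
  ultimately have "good k ((L @ [x]) @ xs)" using Cons.IH[of "L @ [x]"] v by simp
  then show ?case by simp
qed


theorem theorem1:
  fixes P :: "nat set"
  assumes "finite P" and "\<forall>q\<in>P. prime q"
  shows "\<exists>p. gen_euclid_seq P p \<and> (\<forall>q. prime q \<longrightarrow> (\<exists>i. p i = q))"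
proof -
  note finP = assms(1) and prP = assms(2)
  define sl where "sl = sorted_list_of_set P"
  have sl: "distinct sl" "set sl = P" "length sl = card P"
    using finP by (auto simp: sl_def)
  define stp where "stp k L = (SOME xs. valid (set L) xs \<and> xs \<noteq> [] \<and> (prime k \<longrightarrow> k \<in> set L \<union> set xs))"
    for k :: nat and L :: "nat list"
  define Ls where "Ls = rec_nat sl (\<lambda>k L. L @ stp k L)"
  have Ls0: "Ls 0 = sl" by (simp add: Ls_def)
  have LsS: "Ls (Suc k) = Ls k @ stp k (Ls k)" for k by (simp add: Ls_def)
  have stp_ok: "valid (set L) (stp k L) \<and> stp k L \<noteq> [] \<and> (prime k \<longrightarrow> k \<in> set L \<union> set (stp k L))"
    if prL: "\<forall>x\<in>set L. prime x" for k L
  proof -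
    have "\<exists>xs. valid (set L) xs \<and> xs \<noteq> [] \<and> (prime k \<longrightarrow> k \<in> set L \<union> set xs)"
    proof (cases "prime k")
      case True
      then show ?thesis using reach2[of "set L" k] prL by auto
    next
      case False
      obtain xs where "valid (set L) xs" "xs \<noteq> []" using reach2[of "set L" 2] prL by auto
      then show ?thesis using False by auto
    qed
    then show ?thesis unfolding stp_def by (rule someI_ex)
  qed
  have inv: "good (card P) (Ls k) \<and> take (card P) (Ls k) = sl \<and> length (Ls k) \<ge> card P + k \<and>
             (\<forall>q. prime q \<and> q < k \<longrightarrow> q \<in> set (Ls k))" for k
  proof (induction k)
    case 0
    have "good (card P) sl" using sl prP by (auto simp: good_def)
    then show ?case using Ls0 sl by simp
  next
    case (Suc k)
    have pr: "\<forall>x\<in>set (Ls k). prime x" using Suc.IH by (simp add: good_def)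
    note ok = stp_ok[OF pr, of k]
    have "good (card P) (Ls (Suc k))" using good_append Suc.IH ok LsS by simp
    moreover have "take (card P) (Ls (Suc k)) = sl" using Suc.IH LsS by simp
    moreover have "length (Ls (Suc k)) \<ge> card P + Suc k" using Suc.IH LsS ok
      by (simp add: Suc_le_eq length_greater_0_conv[symmetric] del: length_greater_0_conv)
    moreover have "\<forall>q. prime q \<and> q < Suc k \<longrightarrow> q \<in> set (Ls (Suc k))"
    proof (intro allI impI)
      fix q assume q: "prime q \<and> q < Suc k"
      show "q \<in> set (Ls (Suc k))"
      proof (cases "q < k")
        case True then show ?thesis using Suc.IH LsS q by auto
      next
        case False then have "q = k" using q by simp
        then show ?thesis using ok q LsS by auto
      qed
    qed
    ultimately show ?case by blast
  qed
  have pref: "\<exists>ys. Ls (k + d) = Ls k @ ys" for k d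
  proof (induction d)
    case 0 then show ?case by simp
  next
    case (Suc d)
    then obtain ys where "Ls (k + d) = Ls k @ ys" by blast
    then show ?case using LsS[of "k + d"] by simp
  qed
  have cons: "Ls a ! i = Ls b ! i" if "i < length (Ls a)" "i < length (Ls b)" for a b i
  proof -
    have "Ls a ! i = Ls b ! i" if ab: "a \<le> b" and ia: "i < length (Ls a)" for a b
    proof -
      obtain ys where "Ls b = Ls a @ ys" using pref[of a "b - a"] ab by auto
      then show ?thesis using ia by (simp add: nth_append)
    qed
    note h = this
    show ?thesis
    proof (cases "a \<le> b")
      case True then show ?thesis using h that by blast
    next
      case False then have "b \<le> a" by simp
      then show ?thesis using h[of b a] that by simp
    qed
  qed
  define p where "p i = Ls (Suc i) ! i" for i
  have lenS: "i < length (Ls (Suc i))" for i using inv[of "Suc i"] by simp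
  have pL: "p i = Ls k ! i" if "i < length (Ls k)" for i k
    using cons[OF lenS that] p_def by simp
  have gd: "good (card P) (Ls k)" for k using inv by blast
  have prime_p: "prime (p i)" for i
    using gd[of "Suc i"] lenS[of i] p_def by (auto simp: good_def)
  have bij: "bij_betw p {..<card P} P"
  proof -
    have "bij_betw ((!) sl) {..<card P} P" using bij_betw_nth[OF sl(1)] sl by simp
    moreover have "p i = sl ! i" if "i < card P" for i
    proof -
      have "p i = Ls 0 ! i" using pL[of i 0] that sl Ls0 by simp
      then show ?thesis using Ls0 by simp
    qed
    ultimately show ?thesis using bij_betw_cong[of "{..<card P}" p "(!) sl" P] by simp
  qed
  have split: "\<exists>I\<subseteq>{..<j}. p j dvd (\<Prod>i\<in>I. p i) + (\<Prod>i\<in>{..<j} - I. p i)"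
    if j: "j \<ge> card P" for j
  proof -
    define L where "L = Ls (Suc j)"
    have jL: "j < length L" using lenS L_def by simp
    have dL: "distinct L" using gd L_def by (simp add: good_def)
    have "splits (set (take j L)) (L ! j)" using gd[of "Suc j"] j jL L_def by (simp add: good_def)
    then obtain T where T: "T \<subseteq> set (take j L)"
      and dv: "L ! j dvd (\<Prod>x\<in>T. x) + (\<Prod>x\<in>set (take j L) - T. x)"
      unfolding splits_def by blast
    define I where "I = {i\<in>{..<j}. L ! i \<in> T}"
    have img: "(!) L ` {..<j} = set (take j L)" using nth_image[of j L] jL by (simp add: atLeast0LessThan)
    have injj: "inj_on ((!) L) {..<j}" using inj_on_nth[OF dL] jL by simp
    have imI: "(!) L ` I = T" using T img unfolding I_def by auto
    have imD: "(!) L ` ({..<j} - I) = set (take j L) - T"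
      using inj_on_image_set_diff[OF injj, of "{..<j}" I] img imI I_def by auto
    have Isub: "I \<subseteq> {..<j}" and Dsub: "{..<j} - I \<subseteq> {..<j}" unfolding I_def by auto
    have peq: "p i = L ! i" if "i < j" for i using pL[of i "Suc j"] that jL L_def by simp
    have e1: "(\<Prod>i\<in>I. p i) = (\<Prod>x\<in>T. x)"
    proof -
      have "(\<Prod>i\<in>I. p i) = (\<Prod>i\<in>I. L ! i)" using peq I_def by (intro prod.cong) auto
      also have "\<dots> = (\<Prod>x\<in>(!) L ` I. x)"
        using prod.reindex[OF inj_on_subset[OF injj Isub], of "\<lambda>x. x"] by simp
      finally show ?thesis using imI by simp
    qed
    have e2: "(\<Prod>i\<in>{..<j} - I. p i) = (\<Prod>x\<in>set (take j L) - T. x)"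
    proof -
      have "(\<Prod>i\<in>{..<j} - I. p i) = (\<Prod>i\<in>{..<j} - I. L ! i)" using peq by (intro prod.cong) auto
      also have "\<dots> = (\<Prod>x\<in>(!) L ` ({..<j} - I). x)"
        using prod.reindex[OF inj_on_subset[OF injj Dsub], of "\<lambda>x. x"] by simp
      finally show ?thesis using imD by simp
    qed
    have "p j = L ! j" using pL[of j "Suc j"] jL L_def by simp
    then show ?thesis using dv e1 e2 I_def by (intro exI[of _ I]) auto
  qed
  have allp: "\<exists>i. p i = q" if q: "prime q" for q
  proof -
    have "q \<in> set (Ls (Suc q))" using inv[of "Suc q"] q by simp
    then obtain i where i: "i < length (Ls (Suc q))" "Ls (Suc q) ! i = q" by (auto simp: in_set_conv_nth)
    then show ?thesis using pL[OF i(1)] by auto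
  qed
  have "gen_euclid_seq P p" unfolding gen_euclid_seq_def using prime_p bij split by blast
  then show ?thesis using allp by blast
qed

end
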